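(* Let $n,r$ be integers with $n\ge r+2\ge 2$. For every $g\in K$ there exists a unique element $w_g\in F(X)$ representing $g$ that decomposes as $w_g=w_g^\Delta\cdot w_g^{(1)}\cdot w_g^{(2)}\cdots w_g^{(n-1)}$ with $w_g^{(i)}\in F(X^{(i)})$ for $i\in\{1,\dots,n-1\}$ and $w_g^\Delta\in[F(\Delta),F(\Delta)]$. Moreover, for $1\le i\le n-1$, the element $w_g^{(i)}(a^{(i)}_1,\dots,a^{(i)}_r)\in F^{(i)}$, obtained by substituting $a^{(i)}_j$ for $x^{(i)}_j$, equals the projection of $g$ to the factor $F^{(i)}$.
   Context: For $\alpha\in\{1,\dots,n\}$ let $F^{(\alpha)}$ be the free group on $a^{(\alpha)}_1,\dots,a^{(\alpha)}_r$, let $\psi\colon F^{(1)}\times\cdots\times F^{(n)}\to\mathbb Z^r$ send each $a^{(\alpha)}_j$ to the standard basis vector $e_j$, and $K=\ker\psi$. For $\alpha\in\{1,\dots,n-1\}$, $j\in\{1,\dots,r\}$ set $x^{(\alpha)}_j=a^{(\alpha)}_j(a^{(n)}_j)^{-1}\in K$; $X^{(\alpha)}=(x^{(\alpha)}_1,\dots,x^{(\alpha)}_r)$, $X$ the set of all $x^{(\alpha)}_j$, $\Delta=(x^{(1)}_1,x^{(2)}_2,\dots,x^{(r)}_r)$. $F(X)$, $F(X^{(\alpha)})$, $F(\Delta)$ are the abstract free groups on these letters, with $F(X^{(\alpha)}),F(\Delta)\le F(X)$, and "represents" refers to the natural map $F(X)\to K$. $[\cdot,\cdot]$ denotes the commutator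 subgroup. *)

theory Defs
  imports "HOL-Algebra.Algebra"
begin

text \<open>A letter is a pair (e, x): (False, x) stands for the generator x and
  (True, x) for its inverse.\<close>

type_synonym 'a word = "(bool \<times> 'a) list"

fun cons_red :: "bool \<times> 'a \<Rightarrow> 'a word \<Rightarrow> 'a word" where
  "cons_red a [] = [a]"
| "cons_red a (b # bs) =
     (if fst a \<noteq> fst b \<and> snd a = snd b then bs else a # b # bs)"

definition reduce :: "'a word \<Rightarrow> 'a word" where
  "reduce w = foldr cons_red w []"

fun reduced :: "'a word \<Rightarrow> bool" where
  "reduced [] = True"
| "reduced [a] = True"
| "reduced (a # b # w) =
     (\<not> (fst a \<noteq> fst b \<and> snd a = snd b) \<and> reduced (b # w))"

definition free_grp :: "'a set \<Rightarrow> 'a word monoid" where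
  "free_grp S = \<lparr> carrier = {w. reduced w \<and> snd ` set w \<subseteq> S},
                   monoid.mult = (\<lambda>u v. reduce (u @ v)),
                   monoid.one = [] \<rparr>"

definition ord_prod :: "('a, 'b) monoid_scheme \<Rightarrow> 'a list \<Rightarrow> 'a" where
  "ord_prod G xs = foldr (\<lambda>x y. x \<otimes>\<^bsub>G\<^esub> y) xs \<one>\<^bsub>G\<^esub>"

text \<open>Elements of F^(1) x ... x F^(n) are represented by functions
  g :: nat => nat word, g alpha being the component in F^(alpha)
  (a reduced word in the generators a^(alpha)_j, j in {1..r}, encoded as j),
  with g alpha = [] for alpha outside {1..n}.\<close>

definition prod_elem :: "nat \<Rightarrow> nat \<Rightarrow> (nat \<Rightarrow> nat word) \<Rightarrow> bool" where
  "prod_elem n r g \<longleftrightarrow>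
     (\<forall>\<alpha>\<in>{1..n}. g \<alpha> \<in> carrier (free_grp {1..r})) \<and> (\<forall>\<alpha>. \<alpha> \<notin> {1..n} \<longrightarrow> g \<alpha> = [])"

definition exp_sum :: "'a \<Rightarrow> 'a word \<Rightarrow> int" where
  "exp_sum j w = (\<Sum>a\<leftarrow>w. if snd a = j then (if fst a then -1 else 1) else 0)"

text \<open>psi sends a^(alpha)_j to e_j; the j-th coordinate of psi(g).\<close>

definition psi :: "nat \<Rightarrow> (nat \<Rightarrow> nat word) \<Rightarrow> nat \<Rightarrow> int" where
  "psi n g j = (\<Sum>\<alpha>\<in>{1..n}. exp_sum j (g \<alpha>))"

definition K_set :: "nat \<Rightarrow> nat \<Rightarrow> (nat \<Rightarrow> nat word) set" where
  "K_set n r = {g. prod_elem n r g \<and> (\<forall>j\<in>{1..r}. psi n g j = 0)}"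

text \<open>Generators of F(X): x^(alpha)_j is encoded as the pair (alpha, j).\<close>

definition X_set :: "nat \<Rightarrow> nat \<Rightarrow> (nat \<times> nat) set" where
  "X_set n r = {1..n-1} \<times> {1..r}"

definition X_alpha :: "nat \<Rightarrow> nat \<Rightarrow> (nat \<times> nat) set" where
  "X_alpha r \<alpha> = {\<alpha>} \<times> {1..r}"

definition Delta_set :: "nat \<Rightarrow> (nat \<times> nat) set" where
  "Delta_set r = (\<lambda>i. (i, i)) ` {1..r}"

definition FX :: "nat \<Rightarrow> nat \<Rightarrow> (nat \<times> nat) word monoid" where
  "FX n r = free_grp (X_set n r)"

text \<open>The natural map F(X) -> K, x^(alpha)_j |-> a^(alpha)_j (a^(n)_j)^(-1),
  computed componentwise: the beta-component of the image of a word is the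
  free reduction of the concatenation of the beta-components of the letters.\<close>

definition letter_comp :: "nat \<Rightarrow> nat \<Rightarrow> bool \<times> (nat \<times> nat) \<Rightarrow> nat word" where
  "letter_comp n \<beta> l =
     (case l of (e, (\<alpha>, j)) \<Rightarrow>
        if \<beta> = \<alpha> then [(e, j)] else if \<beta> = n then [(\<not> e, j)] else [])"

definition nat_map :: "nat \<Rightarrow> (nat \<times> nat) word \<Rightarrow> (nat \<Rightarrow> nat word)" where
  "nat_map n w = (\<lambda>\<beta>. reduce (concat (map (letter_comp n \<beta>) w)))"

definition subst_a :: "(nat \<times> nat) word \<Rightarrow> nat word" where
  "subst_a w = map (\<lambda>(e, (\<alpha>, j)). (e, j)) w"

end

theory Submission
  imports Defs
begin


definition inl :: "bool \<times> 'a \<Rightarrow> bool \<times> 'a" where "inl a = (\<not> fst a, snd a)"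
definition invw :: "'a word \<Rightarrow> 'a word" where "invw w = rev (map inl w)"
definition act :: "'a word \<Rightarrow> 'a word \<Rightarrow> 'a word" where "act u t = foldr cons_red u t"
definition invpair :: "bool \<times> 'a \<Rightarrow> bool \<times> 'a \<Rightarrow> bool" where
  "invpair a b \<longleftrightarrow> fst a \<noteq> fst b \<and> snd a = snd b"

lemma inl_inl[simp]: "inl (inl a) = a" by (simp add: inl_def)
lemma invw_invw[simp]: "invw (invw w) = w" by (simp add: invw_def rev_map comp_def)
lemma invw_Cons[simp]: "invw (a # w) = invw w @ [inl a]" by (simp add: invw_def)
lemma invw_Nil[simp]: "invw [] = []" by (simp add: invw_def)
lemma invw_append[simp]: "invw (u @ v) = invw v @ invw u" by (simp add: invw_def)

lemma invpair_inl: "invpair a b \<longleftrightarrow> b = inl a"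
  by (cases a; cases b) (auto simp: invpair_def inl_def)

lemma cons_red_Cons: "cons_red a (b # t) = (if invpair a b then t else a # b # t)"
  by (simp add: invpair_def)

lemma reduced_tl: "reduced (b # t) \<Longrightarrow> reduced t"
  by (cases t) auto

lemma reduced_Cons2: "reduced (a # b # t) \<longleftrightarrow> \<not> invpair a b \<and> reduced (b # t)"
  by (simp add: invpair_def)

declare cons_red.simps(2)[simp del] reduced.simps(3)[simp del]

lemma reduced_cons_red: "reduced t \<Longrightarrow> reduced (cons_red a t)"
  by (cases t) (auto simp: cons_red_Cons reduced_Cons2 dest: reduced_tl)

lemma act_Nil[simp]: "act [] t = t" and act_Cons[simp]: "act (a # u) t = cons_red a (act u t)"
  by (simp_all add: act_def)
lemma act_append: "act (u @ v) t = act u (act v t)" by (simp add: act_def)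

lemma reduce_Nil[simp]: "reduce [] = []" and reduce_Cons: "reduce (a # w) = cons_red a (reduce w)"
  by (simp_all add: reduce_def)

lemma act_reduced: "reduced t \<Longrightarrow> reduced (act u t)"
  by (induction u) (auto intro: reduced_cons_red)

lemma reduced_reduce[simp]: "reduced (reduce w)"
  using act_reduced[of "[]" w] by (simp add: reduce_def act_def)

lemma reduce_reduced: "reduced w \<Longrightarrow> reduce w = w"
proof (induction w)
  case Nil then show ?case by simp
next
  case (Cons a w)
  then have "reduce w = w" using reduced_tl by blast
  then show ?case using Cons.prems
    by (cases w) (auto simp: reduce_Cons cons_red_Cons reduced_Cons2)
qed

lemma cancel: "reduced t \<Longrightarrow> cons_red (inl a) (cons_red a t) = t"
proof (cases t)
  case Nil then show ?thesis by (simp add: cons_red_Cons invpair_inl inl_def)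
next
  case (Cons b t')
  assume r: "reduced t"
  show ?thesis
  proof (cases "invpair a b")
    case True
    then have b: "b = inl a" by (simp add: invpair_inl)
    show ?thesis
    proof (cases t')
      case Nil then show ?thesis using Cons b True by (simp add: cons_red_Cons invpair_inl)
    next
      case (Cons c t'')
      with r \<open>t = b # t'\<close> have "\<not> invpair b c" by (simp add: reduced_Cons2)
      then have "\<not> invpair (inl a) c" using b by simp
      then show ?thesis using Cons \<open>t = b # t'\<close> b True by (simp add: cons_red_Cons)
    qed
  next
    case False
    then show ?thesis using Cons by (simp add: cons_red_Cons invpair_inl)
  qed
qed

lemma reduce_act: "reduce w = act w []" by (simp add: reduce_def act_def)

lemma reduce_append: "reduce (u @ v) = act u (reduce v)"
  by (simp add: reduce_def act_def)

lemma act_reduce: "reduced t \<Longrightarrow> act (reduce u) t = act u t"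
proof (induction u)
  case Nil then show ?case by simp
next
  case (Cons a u)
  have IH: "act (reduce u) t = act u t" using Cons by blast
  have rs: "reduced (reduce u)" by simp
  show ?case
  proof (cases "reduce u")
    case Nil
    then show ?thesis using IH by (simp add: reduce_Cons)
  next
    case (Cons b s')
    show ?thesis
    proof (cases "invpair a b")
      case True
      then have b: "b = inl a" by (simp add: invpair_inl)
      have "act u t = cons_red b (act s' t)" using IH Cons by simp
      have "cons_red a (act u t) = act s' t"
        using cancel[of "act s' t" "inl a"] b act_reduced[OF Cons.prems] \<open>act u t = cons_red b (act s' t)\<close> by simp
      moreover have "reduce (a#u) = s'" using Cons True by (simp add: reduce_Cons cons_red_Cons)
      ultimately show ?thesis by simp
    next
      case False
      then show ?thesis using Cons IH by (simp add: reduce_Cons cons_red_Cons)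
    qed
  qed
qed

lemma reduce_reduce_left[simp]: "reduce (reduce u @ v) = reduce (u @ v)"
  by (simp add: reduce_append act_reduce)
lemma reduce_reduce_right[simp]: "reduce (u @ reduce v) = reduce (u @ v)"
  by (simp add: reduce_append reduce_reduced)
lemma reduce_idem[simp]: "reduce (reduce u) = reduce u"
  by (simp add: reduce_reduced)

lemma act_invw: "reduced t \<Longrightarrow> act (invw u) (act u t) = t"
proof (induction u)
  case Nil then show ?case by simp
next
  case (Cons a u)
  then show ?case using cancel[OF act_reduced[OF Cons.prems, of u], of a]
    by (simp add: act_append)
qed

lemma reduce_invw_left[simp]: "reduce (invw u @ u @ v) = reduce v"
proof -
  have "reduce (invw u @ u @ v) = act (invw u) (act u (reduce v))"
    by (simp add: reduce_append act_append)
  then show ?thesis using act_invw[of "reduce v" u] by simp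
qed

lemma reduce_invw_right[simp]: "reduce (u @ invw u @ v) = reduce v"
  using reduce_invw_left[of "invw u" v] by simp

lemma reduce_invw_left0[simp]: "reduce (invw u @ u) = []"
  using reduce_invw_left[of u "[]"] by simp
lemma reduce_invw_right0[simp]: "reduce (u @ invw u) = []"
  using reduce_invw_right[of u "[]"] by simp

lemma set_cons_red: "set (cons_red a t) \<subseteq> insert a (set t)"
  by (cases t) (auto simp: cons_red_Cons)
lemma set_act: "set (act u t) \<subseteq> set u \<union> set t"
  by (induction u) (use set_cons_red in fastforce)+
lemma set_reduce: "set (reduce w) \<subseteq> set w"
  using set_act[of w "[]"] by (simp add: reduce_act)
lemma set_invw: "snd ` set (invw w) = snd ` set w"
  by (simp add: invw_def image_image inl_def)



lemma free_grp_mult[simp]: "x \<otimes>\<^bsub>free_grp S\<^esub> y = reduce (x @ y)"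
  and free_grp_one[simp]: "\<one>\<^bsub>free_grp S\<^esub> = []"
  and free_grp_carrier: "carrier (free_grp S) = {w. reduced w \<and> snd ` set w \<subseteq> S}"
  by (simp_all add: free_grp_def)

lemma in_free_grp: "w \<in> carrier (free_grp S) \<longleftrightarrow> reduced w \<and> snd ` set w \<subseteq> S"
  by (simp add: free_grp_def)

lemma reduce_in_free_grp: "snd ` set w \<subseteq> S \<Longrightarrow> reduce w \<in> carrier (free_grp S)"
  using set_reduce[of w] by (auto simp: in_free_grp)

lemma free_grp_group: "group (free_grp S)"
proof (rule groupI)
  fix x y assume "x \<in> carrier (free_grp S)" "y \<in> carrier (free_grp S)"
  then show "x \<otimes>\<^bsub>free_grp S\<^esub> y \<in> carrier (free_grp S)"
    by simp (rule reduce_in_free_grp, auto simp: in_free_grp)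
next
  show "\<one>\<^bsub>free_grp S\<^esub> \<in> carrier (free_grp S)" by (simp add: in_free_grp)
next
  fix x y z
  show "x \<otimes>\<^bsub>free_grp S\<^esub> y \<otimes>\<^bsub>free_grp S\<^esub> z = x \<otimes>\<^bsub>free_grp S\<^esub> (y \<otimes>\<^bsub>free_grp S\<^esub> z)"
    by simp
next
  fix x assume "x \<in> carrier (free_grp S)"
  then show "\<one>\<^bsub>free_grp S\<^esub> \<otimes>\<^bsub>free_grp S\<^esub> x = x" by (simp add: in_free_grp reduce_reduced)
next
  fix x assume "x \<in> carrier (free_grp S)"
  then have "reduce (invw x) \<in> carrier (free_grp S)" by (intro reduce_in_free_grp) (auto simp: in_free_grp set_invw)
  moreover have "reduce (invw x) \<otimes>\<^bsub>free_grp S\<^esub> x = \<one>\<^bsub>free_grp S\<^esub>" by simp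
  ultimately show "\<exists>y\<in>carrier (free_grp S). y \<otimes>\<^bsub>free_grp S\<^esub> x = \<one>\<^bsub>free_grp S\<^esub>" by blast
qed

lemma free_grp_inv: "x \<in> carrier (free_grp S) \<Longrightarrow> inv\<^bsub>free_grp S\<^esub> x = reduce (invw x)"
proof (rule group.inv_equality[OF free_grp_group])
  assume "x \<in> carrier (free_grp S)"
  then show "reduce (invw x) \<in> carrier (free_grp S)"
    by (intro reduce_in_free_grp) (auto simp: in_free_grp set_invw)
qed (auto)

lemma ord_prod_free: "ord_prod (free_grp S) xs = reduce (concat xs)"
  by (induction xs) (simp_all add: ord_prod_def)

definition ec :: "'a \<Rightarrow> bool \<times> 'a \<Rightarrow> int" where
  "ec c a = (if snd a = c then (if fst a then -1 else 1) else 0)"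

lemma exp_sum_Nil[simp]: "exp_sum c [] = 0"
  and exp_sum_Cons[simp]: "exp_sum c (a # w) = ec c a + exp_sum c w"
  and exp_sum_append[simp]: "exp_sum c (u @ v) = exp_sum c u + exp_sum c v"
  by (simp_all add: exp_sum_def ec_def)

lemma ec_inl[simp]: "ec c (inl a) = - ec c a" by (simp add: ec_def inl_def)

lemma exp_sum_cons_red[simp]: "exp_sum c (cons_red a t) = ec c a + exp_sum c t"
  by (cases t) (auto simp: cons_red_Cons invpair_inl)

lemma exp_sum_act[simp]: "exp_sum c (act u t) = exp_sum c u + exp_sum c t"
  by (induction u) auto

lemma exp_sum_reduce[simp]: "exp_sum c (reduce w) = exp_sum c w"
  by (simp add: reduce_act)

lemma exp_sum_invw[simp]: "exp_sum c (invw w) = - exp_sum c w"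
  by (induction w) auto

lemma exp_sum_notin: "c \<notin> snd ` set w \<Longrightarrow> exp_sum c w = 0"
  by (induction w) (auto simp: ec_def)

definition cmf :: "(bool \<times> 'a \<Rightarrow> 'b word) \<Rightarrow> 'a word \<Rightarrow> 'b word" where
  "cmf f w = concat (map f w)"

lemma cmf_simps[simp]: "cmf f [] = []" "cmf f (a # w) = f a @ cmf f w" "cmf f (u @ v) = cmf f u @ cmf f v"
  by (simp_all add: cmf_def)

lemma cmf_concat: "cmf f (concat xs) = concat (map (cmf f) xs)"
  by (induction xs) auto

lemma cmf_cons_red:
  assumes f: "\<And>a. f (inl a) = invw (f a)"
  shows "reduce (cmf f (cons_red a s)) = act (f a) (reduce (cmf f s))"
proof (cases s)
  case Nil then show ?thesis by (simp add: reduce_act)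
next
  case (Cons b s')
  show ?thesis
  proof (cases "invpair a b")
    case True
    then have "b = inl a" by (simp add: invpair_inl)
    then have "act (f a) (reduce (cmf f s)) = act (invw (invw (f a))) (act (invw (f a)) (reduce (cmf f s')))"
      using Cons f by (simp add: reduce_append)
    also have "\<dots> = reduce (cmf f s')" by (rule act_invw) simp
    finally show ?thesis using Cons True by (simp add: cons_red_Cons)
  next
    case False
    then show ?thesis using Cons by (simp add: cons_red_Cons reduce_append)
  qed
qed

lemma cmf_reduce:
  assumes f: "\<And>a. f (inl a) = invw (f a)"
  shows "reduce (cmf f (reduce w)) = reduce (cmf f w)"
proof (induction w)
  case Nil then show ?case by simp
next
  case (Cons a w)
  then show ?case using cmf_cons_red[where f=f and a=a and s="reduce w", OF f]
    by (simp add: reduce_Cons reduce_append)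
qed

lemma cmf_reduce_append:
  assumes f: "\<And>a. f (inl a) = invw (f a)"
  shows "reduce (cmf f (reduce w @ v)) = reduce (cmf f (w @ v))"
proof -
  have "reduce (cmf f (reduce w @ v)) = reduce (reduce (cmf f (reduce w)) @ cmf f v)" by simp
  also have "\<dots> = reduce (cmf f (w @ v))" by (simp only: cmf_reduce[where f=f, OF f] reduce_reduce_left cmf_simps)
  finally show ?thesis .
qed

lemma cmf_single: "(\<And>a. a \<in> set w \<Longrightarrow> f a = [h a]) \<Longrightarrow> cmf f w = map h w"
  by (induction w) auto

lemma cmf_empty: "(\<And>a. a \<in> set w \<Longrightarrow> f a = []) \<Longrightarrow> cmf f w = []"
  by (induction w) auto

lemma reduced_map:
  assumes "reduced w" "\<And>a b. a \<in> set w \<Longrightarrow> b \<in> set w \<Longrightarrow> invpair (h a) (h b) \<Longrightarrow> invpair a b"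
  shows "reduced (map h w)"
  using assms
proof (induction w rule: reduced.induct)
  case (3 a b w)
  have "\<not> invpair (h a) (h b)" using 3(2) 3(3)[of a b] by (auto simp: reduced_Cons2)
  moreover have "reduced (map h (b # w))" using 3 by (auto simp: reduced_Cons2)
  ultimately show ?case by (simp add: reduced_Cons2)
qed auto

lemma single_gen_exp:
  "reduced w \<Longrightarrow> (\<forall>a\<in>set w. snd a = c) \<Longrightarrow> w \<noteq> [] \<Longrightarrow>
    exp_sum c w = (if fst (hd w) then - int (length w) else int (length w))"
proof (induction w rule: reduced.induct)
  case (2 a) then show ?case by (simp add: ec_def)
next
  case (3 a b w)
  then have "fst a = fst b" by (auto simp: reduced_Cons2 invpair_def)
  with 3 show ?case by (auto simp: reduced_Cons2 ec_def)
qed auto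

lemma single_gen_trivial:
  "reduced w \<Longrightarrow> (\<forall>a\<in>set w. snd a = c) \<Longrightarrow> exp_sum c w = 0 \<Longrightarrow> w = []"
  using single_gen_exp[of w c] by (cases "w = []") (auto split: if_splits)

lemma concat_single:
  "distinct xs \<Longrightarrow> i \<in> set xs \<Longrightarrow> (\<And>k. k \<in> set xs \<Longrightarrow> k \<noteq> i \<Longrightarrow> h k = []) \<Longrightarrow> concat (map h xs) = h i"
proof (induction xs)
  case (Cons x xs)
  show ?case
  proof (cases "x = i")
    case True
    then have "concat (map h xs) = []" using Cons.prems by (auto intro!: concat_eq_Nil_conv[THEN iffD2] )
    then show ?thesis using True by simp
  next
    case False then show ?thesis using Cons by auto
  qed
qed simp



lemma letter_comp_eq: "letter_comp n \<beta> a =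
  (if \<beta> = fst (snd a) then [(fst a, snd (snd a))] else if \<beta> = n then [(\<not> fst a, snd (snd a))] else [])"
  by (cases a) (auto simp: letter_comp_def)

lemma letter_comp_inl: "letter_comp n \<beta> (inl a) = invw (letter_comp n \<beta> a)"
  by (simp add: letter_comp_eq inl_def)

lemma nat_map_cmf: "nat_map n w \<beta> = reduce (cmf (letter_comp n \<beta>) w)"
  by (simp add: nat_map_def cmf_def)

lemma set_cmf: "x \<in> set (cmf f w) \<Longrightarrow> \<exists>a\<in>set w. x \<in> set (f a)"
  by (simp add: cmf_def)

lemma exp_cmf: "(\<And>a. a \<in> set w \<Longrightarrow> exp_sum c (f a) = ec c' a) \<Longrightarrow> exp_sum c (cmf f w) = exp_sum c' w"
  by (induction w) auto

lemma subst_a_eq: "subst_a w = map (\<lambda>a. (fst a, snd (snd a))) w"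
  by (simp add: subst_a_def case_prod_beta)

lemma Delta_sub: "r < n \<Longrightarrow> Delta_set r \<subseteq> X_set n r"
  by (auto simp: Delta_set_def X_set_def)

lemma H_sub: assumes rn: "r < n" shows "carrier (free_grp (Delta_set r)) \<subseteq> carrier (FX n r)"
proof
  fix x assume "x \<in> carrier (free_grp (Delta_set r))"
  then have x: "reduced x" "snd ` set x \<subseteq> Delta_set r" by (simp_all add: in_free_grp)
  from order_trans[OF x(2) Delta_sub[OF rn]] x(1)
  show "x \<in> carrier (FX n r)" by (simp add: FX_def in_free_grp)
qed

lemma FX_inv: "x \<in> carrier (FX n r) \<Longrightarrow> inv\<^bsub>FX n r\<^esub> x = reduce (invw x)"
  by (simp add: FX_def free_grp_inv)

lemma FX_mult[simp]: "x \<otimes>\<^bsub>FX n r\<^esub> y = reduce (x @ y)"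
  by (simp add: FX_def)

lemma FX_one[simp]: "\<one>\<^bsub>FX n r\<^esub> = []"
  by (simp add: FX_def)

lemma ord_prod_FX: "ord_prod (FX n r) xs = reduce (concat xs)"
  by (simp add: FX_def ord_prod_free)

lemma derived_props:
  assumes rn: "r < n" and w: "w \<in> derived (FX n r) (carrier (free_grp (Delta_set r)))"
  shows "w \<in> carrier (free_grp (Delta_set r)) \<and> (\<forall>c. exp_sum c w = 0)"
proof -
  let ?H = "carrier (free_grp (Delta_set r))"
  let ?G = "FX n r"
  have ds: "h \<in> ?H \<and> (\<forall>c. exp_sum c h = 0)" if hds: "h \<in> derived_set ?G ?H" for h
  proof -
    have "\<exists>h1\<in>?H. \<exists>h2\<in>?H. h = h1 \<otimes>\<^bsub>?G\<^esub> h2 \<otimes>\<^bsub>?G\<^esub> inv\<^bsub>?G\<^esub> h1 \<otimes>\<^bsub>?G\<^esub> inv\<^bsub>?G\<^esub> h2"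
      using hds by (simp only: UN_iff singleton_iff)
    then obtain h1 where h1: "h1 \<in> ?H" "\<exists>h2\<in>?H. h = h1 \<otimes>\<^bsub>?G\<^esub> h2 \<otimes>\<^bsub>?G\<^esub> inv\<^bsub>?G\<^esub> h1 \<otimes>\<^bsub>?G\<^esub> inv\<^bsub>?G\<^esub> h2"
      by (rule bexE)
    from h1(2) obtain h2 where h2: "h2 \<in> ?H" "h = h1 \<otimes>\<^bsub>?G\<^esub> h2 \<otimes>\<^bsub>?G\<^esub> inv\<^bsub>?G\<^esub> h1 \<otimes>\<^bsub>?G\<^esub> inv\<^bsub>?G\<^esub> h2"
      by (rule bexE)
    note h = h1(1) h2
    have c: "h1 \<in> carrier ?G" "h2 \<in> carrier ?G"
      using subsetD[OF H_sub[OF rn] h(1)] subsetD[OF H_sub[OF rn] h(2)] by simp_all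
    have eq: "h = reduce (h1 @ h2 @ invw h1 @ invw h2)"
      using h(3) by (simp add: FX_inv[OF c(1)] FX_inv[OF c(2)])
    have A: "reduce (h1 @ h2 @ invw h1 @ invw h2) \<in> ?H"
      using h(1,2) by (intro reduce_in_free_grp) (simp add: in_free_grp set_invw image_Un)
    have B: "\<forall>c. exp_sum c (reduce (h1 @ h2 @ invw h1 @ invw h2)) = 0" by simp
    show ?thesis unfolding eq using A B by (rule conjI)
  qed
  from w show ?thesis
    unfolding derived_def
  proof (induction rule: generate.induct)
    case one then show ?case by (simp add: in_free_grp)
  next
    case (incl h) then show ?case by (rule ds)
  next
    case (inv h)
    then have "h \<in> ?H \<and> (\<forall>c. exp_sum c h = 0)" by (rule ds)
    then have hH: "h \<in> ?H" "\<forall>c. exp_sum c h = 0" by simp_all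
    have "h \<in> carrier ?G" using subsetD[OF H_sub[OF rn] hH(1)] .
    then have "inv\<^bsub>?G\<^esub> h = reduce (invw h)" by (rule FX_inv)
    moreover have "reduce (invw h) \<in> ?H"
      using hH by (intro reduce_in_free_grp) (simp add: in_free_grp set_invw)
    moreover have "\<forall>c. exp_sum c (reduce (invw h)) = 0" using hH(2) by simp
    ultimately show ?case by simp
  next
    case (eng h1 h2)
    have "reduce (h1 @ h2) \<in> ?H" using eng.IH
      by (intro reduce_in_free_grp) (simp add: in_free_grp image_Un)
    then show ?case using eng.IH by simp
  qed
qed

lemma sign_lemma: "(\<forall>x\<in>set w. snd x = snd a \<longrightarrow> fst x = fst a) \<Longrightarrow> ec (snd a) a * exp_sum (snd a) w \<ge> 0"
proof (induction w)
  case (Cons x w)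
  have "ec (snd a) a * ec (snd a) x \<ge> 0" using Cons.prems by (auto simp: ec_def)
  then show ?case using Cons by (simp add: distrib_left)
qed simp

lemma reduce_mid: "reduce (x @ reduce u @ v) = reduce (x @ u @ v)"
proof -
  have "reduce (x @ (reduce u @ v)) = reduce (x @ reduce (reduce u @ v))" by (simp only: reduce_reduce_right)
  also have "\<dots> = reduce (x @ reduce (u @ v))" by simp
  also have "\<dots> = reduce (x @ u @ v)" by (simp only: reduce_reduce_right)
  finally show ?thesis .
qed

lemma reduce_mid_Cons: "reduce (a # reduce u @ v) = reduce (a # u @ v)"
  using reduce_mid[of "[a]" u v] by simp

lemma reduce_cancel_mid: "reduce (x @ invw (reduce p) @ p @ y) = reduce (x @ y)"
proof -
  have "reduce (invw (reduce p) @ p @ y) = reduce (invw (reduce p) @ reduce (p @ y))" by simp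
  also have "\<dots> = reduce (invw (reduce p) @ reduce (reduce p @ y))" by simp
  also have "\<dots> = reduce (invw (reduce p) @ reduce p @ y)" by (simp only: reduce_reduce_right)
  also have "\<dots> = reduce y" by simp
  finally have "reduce (invw (reduce p) @ p @ y) = reduce y" .
  then have "reduce (x @ reduce (invw (reduce p) @ p @ y)) = reduce (x @ reduce y)" by simp
  then show ?thesis by (simp only: reduce_reduce_right)
qed

lemma zero_exp_in_derived:
  assumes rn: "r < n"
  shows "snd ` set L \<subseteq> Delta_set r \<Longrightarrow> (\<forall>c. exp_sum c L = 0) \<Longrightarrow>
    reduce L \<in> derived (FX n r) (carrier (free_grp (Delta_set r)))"
proof (induction "length L" arbitrary: L rule: less_induct)
  case less
  let ?H = "carrier (free_grp (Delta_set r))"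
  let ?G = "FX n r"
  show ?case
  proof (cases L)
    case Nil then show ?thesis
      using generate.one[of ?G] by (simp add: derived_def)
  next
    case (Cons a L')
    have e: "exp_sum (snd a) L' = - ec (snd a) a"
    proof -
      have "exp_sum (snd a) L = 0" using less.prems(2) by blast
      then show ?thesis using Cons by simp
    qed
    have "inl a \<in> set L'"
    proof (rule ccontr)
      assume "inl a \<notin> set L'"
      then have "\<forall>x\<in>set L'. snd x = snd a \<longrightarrow> fst x = fst a"
      proof (intro ballI impI)
        fix x assume "x \<in> set L'" "snd x = snd a"
        then have "x \<noteq> inl a" using \<open>inl a \<notin> set L'\<close> by blast
        then show "fst x = fst a" using \<open>snd x = snd a\<close> by (cases x; cases a) (auto simp: inl_def)
      qed
      from sign_lemma[OF this] e have "ec (snd a) a * ec (snd a) a \<le> 0" by simp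
      moreover have "ec (snd a) a * ec (snd a) a = 1" by (simp add: ec_def)
      ultimately show False by simp
    qed
    then obtain p q where pq: "L' = p @ inl a # q" by (meson split_list)
    have aD: "snd a \<in> Delta_set r" using less.prems(1) Cons by auto
    have h1: "[a] \<in> ?H" using aD by (simp add: in_free_grp)
    have h2: "reduce p \<in> ?H"
      using less.prems(1) Cons pq by (intro reduce_in_free_grp) auto
    have c1: "[a] \<in> carrier ?G" "reduce p \<in> carrier ?G" using h1 h2 H_sub[OF rn] by auto
    let ?comm = "[a] \<otimes>\<^bsub>?G\<^esub> reduce p \<otimes>\<^bsub>?G\<^esub> inv\<^bsub>?G\<^esub> [a] \<otimes>\<^bsub>?G\<^esub> inv\<^bsub>?G\<^esub> (reduce p)"
    have "?comm \<in> derived_set ?G ?H" using h1 h2 by blast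
    then have cm: "?comm \<in> derived ?G ?H" unfolding derived_def by (rule generate.incl)
    have "reduce (p @ q) \<in> derived ?G ?H"
    proof (rule less.hyps)
      show "length (p @ q) < length L" using Cons pq by simp
      show "snd ` set (p @ q) \<subseteq> Delta_set r" using less.prems(1) Cons pq by auto
      show "\<forall>c. exp_sum c (p @ q) = 0"
      proof
        fix c have "exp_sum c L = 0" using less.prems(2) by blast
        then show "exp_sum c (p @ q) = 0" using Cons pq by simp
      qed
    qed
    from generate.eng[OF cm[unfolded derived_def] this[unfolded derived_def]]
    have "?comm \<otimes>\<^bsub>?G\<^esub> reduce (p @ q) \<in> derived ?G ?H" by (simp only: derived_def)
    moreover have "?comm \<otimes>\<^bsub>?G\<^esub> reduce (p @ q) = reduce L"
    proof -
      have "?comm \<otimes>\<^bsub>?G\<^esub> reduce (p @ q) = reduce ((a # p @ [inl a]) @ invw (reduce p) @ p @ q)"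
        by (simp add: FX_inv[OF c1(1)] FX_inv[OF c1(2)] reduce_mid_Cons)
      also have "\<dots> = reduce ((a # p @ [inl a]) @ q)" by (rule reduce_cancel_mid)
      finally show ?thesis using Cons pq by simp
    qed
    ultimately show ?thesis by simp
  qed
qed



definition negs :: "(nat \<times> nat) word \<Rightarrow> nat word" where
  "negs w = map (\<lambda>a. (\<not> fst a, snd (snd a))) w"

lemma ws_letters:
  assumes "w \<in> carrier (free_grp (X_alpha r k))" "a \<in> set w"
  shows "fst (snd a) = k" "snd (snd a) \<in> {1..r}"
  using assms by (auto simp: in_free_grp X_alpha_def)

lemma D_letters:
  assumes "wD \<in> carrier (free_grp (Delta_set r))" "a \<in> set wD"
  shows "\<exists>k\<in>{1..r}. snd a = (k, k)"
  using assms by (auto simp: in_free_grp Delta_set_def)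

lemma comp_i:
  assumes rn: "r < n" and wD: "wD \<in> carrier (free_grp (Delta_set r))" "\<forall>c. exp_sum c wD = 0"
  and ws: "\<forall>k\<in>{1..n-1}. ws k \<in> carrier (free_grp (X_alpha r k))"
  and i: "i \<in> {1..n-1}"
  shows "nat_map n (reduce (wD @ concat (map ws [1..<n]))) i = subst_a (ws i)"
proof -
  let ?f = "letter_comp n i"
  let ?C = "concat (map ws [1..<n])"
  have f: "\<And>a. ?f (inl a) = invw (?f a)" by (rule letter_comp_inl)
  have in_: "i \<noteq> n" using i by auto
  have red0: "reduce (cmf ?f wD) = []"
  proof (rule single_gen_trivial[where c=i])
    show "reduced (reduce (cmf ?f wD))" by simp
    show "\<forall>a\<in>set (reduce (cmf ?f wD)). snd a = i"
    proof
      fix x assume "x \<in> set (reduce (cmf ?f wD))"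
      then have "x \<in> set (cmf ?f wD)" using set_reduce by blast
      then obtain a where a: "a \<in> set wD" "x \<in> set (?f a)" by (blast dest: set_cmf)
      from D_letters[OF wD(1) a(1)] obtain k where "snd a = (k, k)" by blast
      with a(2) in_ show "snd x = i" by (auto simp: letter_comp_eq split: if_splits)
    qed
    have "exp_sum i (cmf ?f wD) = exp_sum (i, i) wD"
    proof (rule exp_cmf)
      fix a assume "a \<in> set wD"
      from D_letters[OF wD(1) this] obtain k where "snd a = (k, k)" by blast
      then show "exp_sum i (?f a) = ec (i, i) a" using in_
        by (cases a) (auto simp: letter_comp_eq ec_def)
    qed
    then show "exp_sum i (reduce (cmf ?f wD)) = 0" using wD(2) by simp
  qed
  have "cmf ?f ?C = concat (map (\<lambda>k. cmf ?f (ws k)) [1..<n])"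
    by (simp add: cmf_concat comp_def)
  also have "\<dots> = cmf ?f (ws i)"
  proof (rule concat_single)
    show "distinct [1..<n]" by simp
    show "i \<in> set [1..<n]" using i by auto
    fix k assume k: "k \<in> set [1..<n]" "k \<noteq> i"
    then have wk: "ws k \<in> carrier (free_grp (X_alpha r k))" using ws by auto
    show "cmf ?f (ws k) = []"
    proof (rule cmf_empty)
      fix a assume "a \<in> set (ws k)"
      from ws_letters[OF wk this] show "?f a = []" using k in_ by (simp add: letter_comp_eq)
    qed
  qed
  also have "\<dots> = subst_a (ws i)"
    unfolding subst_a_eq
  proof (rule cmf_single)
    fix a assume "a \<in> set (ws i)"
    have wi: "ws i \<in> carrier (free_grp (X_alpha r i))" using ws i by auto
    from ws_letters[OF wi \<open>a \<in> set (ws i)\<close>] show "?f a = [(fst a, snd (snd a))]"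
      by (simp add: letter_comp_eq)
  qed
  finally have C: "cmf ?f ?C = subst_a (ws i)" .
  have wi: "ws i \<in> carrier (free_grp (X_alpha r i))" using ws i by auto
  have rs: "reduced (subst_a (ws i))"
    unfolding subst_a_eq
  proof (rule reduced_map)
    show "reduced (ws i)" using wi by (simp add: in_free_grp)
    fix a b assume "a \<in> set (ws i)" "b \<in> set (ws i)"
      "invpair (fst a, snd (snd a)) (fst b, snd (snd b))"
    moreover have "fst (snd a) = i" "fst (snd b) = i"
      using ws_letters(1)[OF wi \<open>a \<in> set (ws i)\<close>] ws_letters(1)[OF wi \<open>b \<in> set (ws i)\<close>] by simp_all
    ultimately show "invpair a b"
      by (cases a; cases b) (auto simp: invpair_def)
  qed
  have "nat_map n (reduce (wD @ ?C)) i = reduce (cmf ?f (reduce (wD @ ?C)))" by (simp add: nat_map_cmf)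
  also have "\<dots> = reduce (cmf ?f (wD @ ?C))" by (rule cmf_reduce[where f = ?f, OF f])
  also have "\<dots> = reduce (reduce (cmf ?f wD) @ cmf ?f ?C)" by simp
  also have "\<dots> = subst_a (ws i)" using red0 C rs by (simp add: reduce_reduced)
  finally show ?thesis .
qed

lemma comp_n:
  assumes rn: "r < n" and wD: "wD \<in> carrier (free_grp (Delta_set r))"
  and ws: "\<forall>k\<in>{1..n-1}. ws k \<in> carrier (free_grp (X_alpha r k))"
  shows "nat_map n (reduce (wD @ concat (map ws [1..<n]))) n =
         reduce (negs wD @ concat (map (\<lambda>k. negs (ws k)) [1..<n]))"
proof -
  let ?f = "letter_comp n n"
  let ?C = "concat (map ws [1..<n])"
  have f: "\<And>a. ?f (inl a) = invw (?f a)" by (rule letter_comp_inl)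
  have e: "cmf ?f w = negs w" if "\<And>a. a \<in> set w \<Longrightarrow> fst (snd a) \<noteq> n" for w
    unfolding negs_def
  proof (rule cmf_single)
    fix a assume "a \<in> set w"
    then have "fst (snd a) \<noteq> n" by (rule that)
    then show "?f a = [(\<not> fst a, snd (snd a))]" by (simp add: letter_comp_eq)
  qed
  have eD: "cmf ?f wD = negs wD"
  proof (rule e)
    fix a assume "a \<in> set wD"
    from D_letters[OF wD this] obtain k where "k \<in> {1..r}" "snd a = (k, k)" by blast
    then show "fst (snd a) \<noteq> n" using rn by auto
  qed
  have eC: "cmf ?f ?C = concat (map (\<lambda>k. negs (ws k)) [1..<n])"
  proof -
    have "cmf ?f ?C = concat (map (\<lambda>k. cmf ?f (ws k)) [1..<n])"
      by (simp add: cmf_concat comp_def)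
    also have "\<dots> = concat (map (\<lambda>k. negs (ws k)) [1..<n])"
    proof (rule arg_cong[where f = concat], rule map_cong[OF refl])
      fix k assume "k \<in> set [1..<n]"
      then have wk: "ws k \<in> carrier (free_grp (X_alpha r k))" using ws by auto
      show "cmf ?f (ws k) = negs (ws k)"
      proof (rule e)
        fix a assume "a \<in> set (ws k)"
        from ws_letters[OF wk this] \<open>k \<in> set [1..<n]\<close> show "fst (snd a) \<noteq> n" by auto
      qed
    qed
    finally show ?thesis .
  qed
  have "nat_map n (reduce (wD @ ?C)) n = reduce (cmf ?f (reduce (wD @ ?C)))" by (simp add: nat_map_cmf)
  also have "\<dots> = reduce (cmf ?f (wD @ ?C))" by (rule cmf_reduce[where f = ?f, OF f])
  also have "\<dots> = reduce (negs wD @ concat (map (\<lambda>k. negs (ws k)) [1..<n]))" using eD eC by simp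
  finally show ?thesis .
qed

lemma comp_other:
  assumes w: "w \<in> carrier (FX n r)" and b: "\<beta> \<notin> {1..n}"
  shows "nat_map n w \<beta> = []"
proof -
  have "cmf (letter_comp n \<beta>) w = []"
  proof (rule cmf_empty)
    fix a assume "a \<in> set w"
    then have "snd a \<in> X_set n r" using w by (auto simp: FX_def in_free_grp)
    then have "fst (snd a) \<in> {1..n-1}" by (auto simp: X_set_def)
    then show "letter_comp n \<beta> a = []" using b by (auto simp: letter_comp_eq)
  qed
  then show ?thesis by (simp add: nat_map_cmf)
qed

lemma right_cancel: "reduce (u @ R) = reduce (v @ R) \<Longrightarrow> reduce u = reduce v"
proof -
  have k: "reduce x = reduce (reduce (x @ R) @ invw R)" for x
  proof -
    have "reduce (reduce (x @ R) @ invw R) = reduce (x @ R @ invw R)" by simp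
    also have "\<dots> = reduce (x @ reduce (R @ invw R))" by (simp only: reduce_reduce_right)
    also have "\<dots> = reduce x" by simp
    finally show ?thesis by simp
  qed
  assume "reduce (u @ R) = reduce (v @ R)"
  then show ?thesis using k[of u] k[of v] by simp
qed

lemma exp_sum_concat: "exp_sum c (concat xs) = (\<Sum>x\<leftarrow>xs. exp_sum c x)"
  by (induction xs) auto

lemma exp_sum_flip: "exp_sum c (map (\<lambda>a. (\<not> fst a, snd a)) x) = - exp_sum c x"
  by (induction x) (auto simp: ec_def)

lemma exp_sum_dmap: "exp_sum (c1, c2) (map (\<lambda>a. (\<not> fst a, (snd a, snd a))) v) =
   (if c1 = c2 then - exp_sum c1 v else 0)"
  by (induction v) (auto simp: ec_def)



lemma part2:
  assumes rn: "r < n" and g: "g \<in> K_set n r"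
    and h: "w \<in> carrier (FX n r) \<and> nat_map n w = g \<and>
            wD \<in> derived (FX n r) (carrier (free_grp (Delta_set r))) \<and>
            (\<forall>i\<in>{1..n-1}. ws i \<in> carrier (free_grp (X_alpha r i))) \<and>
            w = wD \<otimes>\<^bsub>FX n r\<^esub> ord_prod (FX n r) (map ws [1..<n])"
  shows "\<forall>i\<in>{1..n-1}. subst_a (ws i) = g i"
proof
  fix i assume i: "i \<in> {1..n-1}"
  from h have w: "w = reduce (wD @ concat (map ws [1..<n]))"
    by (simp add: ord_prod_FX)
  from derived_props[OF rn] h have wD: "wD \<in> carrier (free_grp (Delta_set r))" "\<forall>c. exp_sum c wD = 0"
    by auto
  have "nat_map n w = g" using h by blast
  then have "g i = nat_map n w i" by simp
  also have "\<dots> = subst_a (ws i)" unfolding w by (rule comp_i[OF rn wD _ i]) (use h in blast)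
  finally show "subst_a (ws i) = g i" by simp
qed

lemma subst_a_inj:
  assumes "u \<in> carrier (free_grp (X_alpha r i))" "v \<in> carrier (free_grp (X_alpha r i))"
    "subst_a u = subst_a v"
  shows "u = v"
proof -
  have L: "\<And>x. x \<in> set u \<union> set v \<Longrightarrow> fst (snd x) = i"
    using ws_letters(1)[OF assms(1)] ws_letters(1)[OF assms(2)] by blast
  have "inj_on (\<lambda>a. (fst a, snd (snd a))) (set u \<union> set v)"
  proof (rule inj_onI)
    fix a b assume "a \<in> set u \<union> set v" "b \<in> set u \<union> set v"
      "(fst a, snd (snd a)) = (fst b, snd (snd b))"
    moreover have "fst (snd a) = i" "fst (snd b) = i"
      using L calculation(1,2) by auto
    ultimately show "a = b" by (cases a; cases b) auto
  qed
  then show ?thesis using assms(3) by (simp add: subst_a_eq inj_on_map_eq_map)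
qed

lemma negs_inj:
  assumes "u \<in> carrier (free_grp (Delta_set r))" "v \<in> carrier (free_grp (Delta_set r))"
    "negs u = negs v"
  shows "u = v"
proof -
  have "inj_on (\<lambda>a. (\<not> fst a, snd (snd a))) (set u \<union> set v)"
  proof (rule inj_onI)
    fix a b assume "a \<in> set u \<union> set v" "b \<in> set u \<union> set v"
      "(\<not> fst a, snd (snd a)) = (\<not> fst b, snd (snd b))"
    moreover obtain k l where "snd a = (k, k)" "snd b = (l, l)"
      using D_letters[OF assms(1)] D_letters[OF assms(2)] calculation(1,2) by blast
    ultimately show "a = b" by (cases a; cases b) auto
  qed
  then show ?thesis using assms(3) by (simp add: negs_def inj_on_map_eq_map)
qed

lemma negs_reduced:
  assumes "u \<in> carrier (free_grp (Delta_set r))"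
  shows "reduced (negs u)"
  unfolding negs_def
proof (rule reduced_map)
  show "reduced u" using assms by (simp add: in_free_grp)
  fix a b assume ab: "a \<in> set u" "b \<in> set u" "invpair (\<not> fst a, snd (snd a)) (\<not> fst b, snd (snd b))"
  moreover obtain k l where "snd a = (k, k)" "snd b = (l, l)"
    using D_letters[OF assms] ab(1,2) by blast
  ultimately show "invpair a b" by (cases a; cases b) (auto simp: invpair_def)
qed

lemma uniq:
  assumes rn: "r < n" and g: "g \<in> K_set n r"
    and h1: "w1 \<in> carrier (FX n r) \<and> nat_map n w1 = g \<and>
            wD1 \<in> derived (FX n r) (carrier (free_grp (Delta_set r))) \<and>
            (\<forall>i\<in>{1..n-1}. ws1 i \<in> carrier (free_grp (X_alpha r i))) \<and>
            w1 = wD1 \<otimes>\<^bsub>FX n r\<^esub> ord_prod (FX n r) (map ws1 [1..<n])"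
    and h2: "w2 \<in> carrier (FX n r) \<and> nat_map n w2 = g \<and>
            wD2 \<in> derived (FX n r) (carrier (free_grp (Delta_set r))) \<and>
            (\<forall>i\<in>{1..n-1}. ws2 i \<in> carrier (free_grp (X_alpha r i))) \<and>
            w2 = wD2 \<otimes>\<^bsub>FX n r\<^esub> ord_prod (FX n r) (map ws2 [1..<n])"
  shows "w1 = w2"
proof -
  have p1: "\<forall>i\<in>{1..n-1}. subst_a (ws1 i) = g i" by (rule part2[OF rn g h1])
  have p2: "\<forall>i\<in>{1..n-1}. subst_a (ws2 i) = g i" by (rule part2[OF rn g h2])
  have m: "map ws1 [1..<n] = map ws2 [1..<n]"
  proof (rule map_cong[OF refl])
    fix i assume "i \<in> set [1..<n]"
    then have i: "i \<in> {1..n-1}" by auto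
    show "ws1 i = ws2 i"
      by (rule subst_a_inj[of _ r i]) (use h1 h2 p1 p2 i in auto)
  qed
  have D1: "wD1 \<in> carrier (free_grp (Delta_set r))" using derived_props[OF rn] h1 by blast
  have D2: "wD2 \<in> carrier (free_grp (Delta_set r))" using derived_props[OF rn] h2 by blast
  have w1: "w1 = reduce (wD1 @ concat (map ws1 [1..<n]))" using h1 by (simp add: ord_prod_FX)
  have w2': "w2 = reduce (wD2 @ concat (map ws2 [1..<n]))" using h2 by (simp add: ord_prod_FX)
  have w2: "w2 = reduce (wD2 @ concat (map ws1 [1..<n]))" unfolding m by (rule w2')
  have ws1: "\<forall>k\<in>{1..n-1}. ws1 k \<in> carrier (free_grp (X_alpha r k))" using h1 by blast
  have "reduce (negs wD1 @ concat (map (\<lambda>k. negs (ws1 k)) [1..<n])) = g n"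
  proof -
    have "nat_map n w1 = g" using h1 by blast
    then show ?thesis using comp_n[OF rn D1 ws1, folded w1] by simp
  qed
  moreover have "reduce (negs wD2 @ concat (map (\<lambda>k. negs (ws1 k)) [1..<n])) = g n"
  proof -
    have "nat_map n w2 = g" using h2 by blast
    then show ?thesis using comp_n[OF rn D2 ws1, folded w2] by simp
  qed
  ultimately have "reduce (negs wD1) = reduce (negs wD2)" using right_cancel by metis
  then have "negs wD1 = negs wD2" using negs_reduced[OF D1] negs_reduced[OF D2] by (simp add: reduce_reduced)
  then have "wD1 = wD2" using negs_inj[OF D1 D2] by blast
  then show ?thesis using w1 w2 by simp
qed



lemma reduce_cancel_end: "reduce (x @ invw R @ R) = reduce x"
proof -
  have "reduce (x @ invw R @ R) = reduce (x @ reduce (invw R @ R))" by (simp only: reduce_reduce_right)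
  then show ?thesis by simp
qed

lemma exist:
  assumes nr: "n \<ge> r + 2" and g: "g \<in> K_set n r"
  shows "\<exists>w. w \<in> carrier (FX n r) \<and> nat_map n w = g \<and>
            (\<exists>wD ws. wD \<in> derived (FX n r) (carrier (free_grp (Delta_set r))) \<and>
                     (\<forall>i\<in>{1..n-1}. ws i \<in> carrier (free_grp (X_alpha r i))) \<and>
                     w = wD \<otimes>\<^bsub>FX n r\<^esub> ord_prod (FX n r) (map ws [1..<n]))"
proof -
  have rn: "r < n" using nr by simp
  have gp: "prod_elem n r g" and psi0: "\<forall>j\<in>{1..r}. psi n g j = 0" using g by (auto simp: K_set_def)
  have gc: "reduced (g \<alpha>)" "snd ` set (g \<alpha>) \<subseteq> {1..r}" if "\<alpha> \<in> {1..n}" for \<alpha>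
    using gp that by (auto simp: prod_elem_def in_free_grp)
  have gz: "g \<alpha> = []" if "\<alpha> \<notin> {1..n}" for \<alpha>
    using gp that by (auto simp: prod_elem_def)
  define ws where "ws k = map (\<lambda>a. (fst a, (k, snd a))) (g k)" for k
  define R where "R = concat (map (\<lambda>k. negs (ws k)) [1..<n])"
  define v where "v = reduce (g n @ invw R)"
  define wD where "wD = map (\<lambda>a. (\<not> fst a, (snd a, snd a))) v"
  define w where "w = reduce (wD @ concat (map ws [1..<n]))"
  have negs_ws: "negs (ws k) = map (\<lambda>a. (\<not> fst a, snd a)) (g k)" for k
    by (simp add: negs_def ws_def)
  have ws_c: "\<forall>k\<in>{1..n-1}. ws k \<in> carrier (free_grp (X_alpha r k))"
  proof
    fix k assume k: "k \<in> {1..n-1}"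
    then have k': "k \<in> {1..n}" by auto
    have "reduced (ws k)" unfolding ws_def
      by (rule reduced_map) (use gc(1)[OF k'] in \<open>auto simp: invpair_def\<close>)
    moreover have "snd ` set (ws k) \<subseteq> X_alpha r k"
      using gc(2)[OF k'] by (auto simp: ws_def X_alpha_def)
    ultimately show "ws k \<in> carrier (free_grp (X_alpha r k))" by (simp add: in_free_grp)
  qed
  have R_l: "snd ` set R \<subseteq> {1..r}"
  proof
    fix x assume "x \<in> snd ` set R"
    then obtain k a where k: "k \<in> set [1..<n]" and a: "a \<in> set (g k)" "x = snd a"
      by (auto simp: R_def negs_ws)
    then have "k \<in> {1..n}" by auto
    then show "x \<in> {1..r}" using gc(2) a by blast
  qed
  have v_l: "snd ` set v \<subseteq> {1..r}"
  proof -
    have "snd ` set v \<subseteq> snd ` set (g n @ invw R)" unfolding v_def using set_reduce by blast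
    also have "\<dots> \<subseteq> {1..r}" using R_l gc(2)[of n] rn by (auto simp: set_invw image_Un)
    finally show ?thesis .
  qed
  have wD_c: "wD \<in> carrier (free_grp (Delta_set r))"
  proof -
    have "reduced wD" unfolding wD_def
      by (rule reduced_map) (auto simp: v_def invpair_def)
    moreover have "snd ` set wD \<subseteq> Delta_set r"
      using v_l by (auto simp: wD_def Delta_set_def)
    ultimately show ?thesis by (simp add: in_free_grp)
  qed
  have v_exp: "exp_sum j v = 0" for j
  proof (cases "j \<in> {1..r}")
    case True
    have "exp_sum j R = (\<Sum>k\<leftarrow>[1..<n]. - exp_sum j (g k))"
      by (simp add: R_def exp_sum_concat negs_ws exp_sum_flip comp_def)
    also have "\<dots> = (\<Sum>k\<in>{1..<n}. - exp_sum j (g k))"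
      by (simp add: sum_set_upt_conv_sum_list_nat[symmetric])
    also have "\<dots> = - (\<Sum>k\<in>{1..<n}. exp_sum j (g k))" by (simp add: sum_negf)
    finally have eR: "exp_sum j R = - (\<Sum>k\<in>{1..<n}. exp_sum j (g k))" .
    have "{1..n} = insert n {1..<n}" using rn by auto
    then have "psi n g j = exp_sum j (g n) + (\<Sum>k\<in>{1..<n}. exp_sum j (g k))"
      by (simp add: psi_def)
    moreover have "psi n g j = 0" using psi0 True by blast
    ultimately show ?thesis using eR by (simp add: v_def)
  next
    case False
    then have "j \<notin> snd ` set v" using v_l by blast
    then show ?thesis by (rule exp_sum_notin)
  qed
  have wD_exp: "\<forall>c. exp_sum c wD = 0"
  proof
    fix c :: "nat \<times> nat"
    obtain c1 c2 where "c = (c1, c2)" by fastforce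
    then show "exp_sum c wD = 0" by (simp add: wD_def exp_sum_dmap v_exp)
  qed
  have wD_D: "wD \<in> derived (FX n r) (carrier (free_grp (Delta_set r)))"
  proof -
    have "reduce wD \<in> derived (FX n r) (carrier (free_grp (Delta_set r)))"
      by (rule zero_exp_in_derived[OF rn]) (use wD_c wD_exp in \<open>auto simp: in_free_grp\<close>)
    moreover have "reduce wD = wD" using wD_c by (simp add: in_free_grp reduce_reduced)
    ultimately show ?thesis by simp
  qed
  have w_c: "w \<in> carrier (FX n r)"
    unfolding w_def FX_def
  proof (rule reduce_in_free_grp)
    have "snd ` set wD \<subseteq> X_set n r"
      using wD_c Delta_sub[OF rn] by (auto simp: in_free_grp)
    moreover have "snd ` set (ws k) \<subseteq> X_set n r" if "k \<in> set [1..<n]" for k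
    proof -
      have "k \<in> {1..n-1}" using that by auto
      then have "snd ` set (ws k) \<subseteq> X_alpha r k" using ws_c by (auto simp: in_free_grp)
      then show ?thesis using \<open>k \<in> {1..n-1}\<close> by (auto simp: X_alpha_def X_set_def)
    qed
    ultimately show "snd ` set (wD @ concat (map ws [1..<n])) \<subseteq> X_set n r"
      unfolding image_subset_iff by (auto simp del: set_upt)
  qed
  have w_eq: "w = wD \<otimes>\<^bsub>FX n r\<^esub> ord_prod (FX n r) (map ws [1..<n])"
    by (simp add: w_def ord_prod_FX)
  have nat: "nat_map n w = g"
  proof
    fix \<beta>
    show "nat_map n w \<beta> = g \<beta>"
    proof (cases "\<beta> \<in> {1..n-1}")
      case True
      have "nat_map n w \<beta> = subst_a (ws \<beta>)" unfolding w_def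
        by (rule comp_i[OF rn wD_c wD_exp ws_c True])
      then show ?thesis by (simp add: subst_a_eq ws_def comp_def)
    next
      case False
      show ?thesis
      proof (cases "\<beta> = n")
        case True
        have "negs wD = v" by (simp add: negs_def wD_def comp_def)
        then have "nat_map n w n = reduce (v @ R)" unfolding w_def R_def
          using comp_n[OF rn wD_c ws_c] by simp
        also have "\<dots> = reduce (g n @ invw R @ R)" by (simp add: v_def)
        also have "\<dots> = g n" using gc(1)[of n] rn by (simp add: reduce_cancel_end reduce_reduced)
        finally show ?thesis using True by simp
      next
        case False
        then have "\<beta> \<notin> {1..n}" using \<open>\<beta> \<notin> {1..n-1}\<close> by auto
        then show ?thesis using comp_other[OF w_c] gz by simp
      qed
    qed
  qed
  show ?thesis using w_c nat wD_D ws_c w_eq by blast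
qed

theorem lemma3p6:
  fixes n r :: nat and g :: "nat \<Rightarrow> nat word"
  assumes "n \<ge> r + 2"
    and "g \<in> K_set n r"
  shows "(\<exists>!w. w \<in> carrier (FX n r) \<and> nat_map n w = g \<and>
            (\<exists>wD ws. wD \<in> derived (FX n r) (carrier (free_grp (Delta_set r))) \<and>
                     (\<forall>i\<in>{1..n-1}. ws i \<in> carrier (free_grp (X_alpha r i))) \<and>
                     w = wD \<otimes>\<^bsub>FX n r\<^esub> ord_prod (FX n r) (map ws [1..<n])))
       \<and> (\<forall>w wD ws. w \<in> carrier (FX n r) \<and> nat_map n w = g \<and>
            wD \<in> derived (FX n r) (carrier (free_grp (Delta_set r))) \<and>
            (\<forall>i\<in>{1..n-1}. ws i \<in> carrier (free_grp (X_alpha r i))) \<and>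
            w = wD \<otimes>\<^bsub>FX n r\<^esub> ord_prod (FX n r) (map ws [1..<n])
            \<longrightarrow> (\<forall>i\<in>{1..n-1}. subst_a (ws i) = g i))"
proof
  have rn: "r < n" using assms(1) by simp
  from exist[OF assms] obtain w0 where w0: "w0 \<in> carrier (FX n r) \<and> nat_map n w0 = g \<and>
            (\<exists>wD ws. wD \<in> derived (FX n r) (carrier (free_grp (Delta_set r))) \<and>
                     (\<forall>i\<in>{1..n-1}. ws i \<in> carrier (free_grp (X_alpha r i))) \<and>
                     w0 = wD \<otimes>\<^bsub>FX n r\<^esub> ord_prod (FX n r) (map ws [1..<n]))" by blast
  then obtain wD0 ws0 where d0: "w0 \<in> carrier (FX n r) \<and> nat_map n w0 = g \<and>
            wD0 \<in> derived (FX n r) (carrier (free_grp (Delta_set r))) \<and>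
            (\<forall>i\<in>{1..n-1}. ws0 i \<in> carrier (free_grp (X_alpha r i))) \<and>
            w0 = wD0 \<otimes>\<^bsub>FX n r\<^esub> ord_prod (FX n r) (map ws0 [1..<n])" by blast
  show "\<exists>!w. w \<in> carrier (FX n r) \<and> nat_map n w = g \<and>
            (\<exists>wD ws. wD \<in> derived (FX n r) (carrier (free_grp (Delta_set r))) \<and>
                     (\<forall>i\<in>{1..n-1}. ws i \<in> carrier (free_grp (X_alpha r i))) \<and>
                     w = wD \<otimes>\<^bsub>FX n r\<^esub> ord_prod (FX n r) (map ws [1..<n]))"
  proof (rule ex1I[of _ w0])
    show "w0 \<in> carrier (FX n r) \<and> nat_map n w0 = g \<and>
            (\<exists>wD ws. wD \<in> derived (FX n r) (carrier (free_grp (Delta_set r))) \<and>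
                     (\<forall>i\<in>{1..n-1}. ws i \<in> carrier (free_grp (X_alpha r i))) \<and>
                     w0 = wD \<otimes>\<^bsub>FX n r\<^esub> ord_prod (FX n r) (map ws [1..<n]))" by (rule w0)
  next
    fix y assume "y \<in> carrier (FX n r) \<and> nat_map n y = g \<and>
            (\<exists>wD ws. wD \<in> derived (FX n r) (carrier (free_grp (Delta_set r))) \<and>
                     (\<forall>i\<in>{1..n-1}. ws i \<in> carrier (free_grp (X_alpha r i))) \<and>
                     y = wD \<otimes>\<^bsub>FX n r\<^esub> ord_prod (FX n r) (map ws [1..<n]))"
    then obtain wD1 ws1 where d1: "y \<in> carrier (FX n r) \<and> nat_map n y = g \<and>
            wD1 \<in> derived (FX n r) (carrier (free_grp (Delta_set r))) \<and>
            (\<forall>i\<in>{1..n-1}. ws1 i \<in> carrier (free_grp (X_alpha r i))) \<and>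
            y = wD1 \<otimes>\<^bsub>FX n r\<^esub> ord_prod (FX n r) (map ws1 [1..<n])" by blast
    show "y = w0" by (rule uniq[OF rn assms(2) d1 d0])
  qed
next
  have rn: "r < n" using assms(1) by simp
  show "\<forall>w wD ws. w \<in> carrier (FX n r) \<and> nat_map n w = g \<and>
            wD \<in> derived (FX n r) (carrier (free_grp (Delta_set r))) \<and>
            (\<forall>i\<in>{1..n-1}. ws i \<in> carrier (free_grp (X_alpha r i))) \<and>
            w = wD \<otimes>\<^bsub>FX n r\<^esub> ord_prod (FX n r) (map ws [1..<n])
            \<longrightarrow> (\<forall>i\<in>{1..n-1}. subst_a (ws i) = g i)"
  proof (intro allI impI)
    fix w wD ws assume h: "w \<in> carrier (FX n r) \<and> nat_map n w = g \<and>
            wD \<in> derived (FX n r) (carrier (free_grp (Delta_set r))) \<and>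
            (\<forall>i\<in>{1..n-1}. ws i \<in> carrier (free_grp (X_alpha r i))) \<and>
            w = wD \<otimes>\<^bsub>FX n r\<^esub> ord_prod (FX n r) (map ws [1..<n])"
    show "\<forall>i\<in>{1..n-1}. subst_a (ws i) = g i" by (rule part2[OF rn assms(2) h])
  qed
qed

end
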